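(* Assume $Q^s(X^*,\xi)$ is finite for all $\xi\in\Xi^s$ and $\mathcal P^s\neq\emptyset$. Let $\mathcal Z=\{0,1\}^{\mathcal K\times\mathcal T}$ and for $z\in\mathcal Z$ let $\xi^s(z)\in\mathbb R^{\mathcal K\times\mathcal T}$ be given by $\xi^s(z)_{kt}=\xi^{Ls}_{kt}+(\xi^{Us}_{kt}-\xi^{Ls}_{kt})z_{kt}$. Then $w^s(\mathcal P^s;X^* )$ equals the optimal value of the linear program $$\max\sum_{z\in\mathcal Z}P_zQ^s(X^*,\xi^s(z))\quad\text{s.t.}\quad\sum_{z\in\mathcal Z}P_z=1,\ P_z\ge0\ \forall z,\ \ \gamma^{Ls}_{kt}\le\sum_{z\in\mathcal Z}P_z\,\xi^s(z)_{kt}\le\gamma^{Us}_{kt}\ \forall k\in\mathcal K,t\in\mathcal T.$$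
   Context: Fix finite index sets $\mathcal K,\mathcal T$, a cluster index $s$, and a fixed first-stage decision $X^*$. For a demand vector $\xi=(\xi_{kt})_{k\in\mathcal K,t\in\mathcal T}$, the recourse value is $Q^s(X^*,\xi)=\min\{C_Y^\top Y:\ B_YY\ge d-B^s_XX^*-B_\xi\xi,\ Y\ge 0\}$ (value $+\infty$ if infeasible), where $C_Y,B_Y,B_\xi,B^s_X,d$ are fixed data not depending on $\xi$. Given $\xi^{Ls}\le\xi^{Us}$ and $\gamma^{Ls}\le\gamma^{Us}$ in $\mathbb R^{\mathcal K\times\mathcal T}$, $\Xi^s=\{\xi:\xi^{Ls}_{kt}\le\xi_{kt}\le\xi^{Us}_{kt}\ \forall k,t\}$ and $\mathcal P^s$ is the set of probability distributions $\mathbb P$ supported on $\Xi^s$ with $\gamma^{Ls}_{kt}\le\mathbb E_{\mathbb P}[\xi_{kt}]\le\gamma^{Us}_{kt}$ for all $k,t$. The worst-case expected recourse value is $w^s(\mathcal P^s;X^* )=\sup_{\mathbb P\in\mathcal P^s}\mathbb E_{\mathbb P}[Q^s(X^*,\xi)]$. *)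

theory Defs
  imports "HOL-Probability.Probability"
begin

text \<open>Demand vectors are indexed by a finite index type 'i (instantiated with K x T).
  Second-stage variables Y are indexed by a finite type 'y, constraint rows by 'r,
  first-stage variables X by 'x.\<close>

definition lp_min :: "('y::finite \<Rightarrow> real) \<Rightarrow> ('r::finite \<Rightarrow> 'y \<Rightarrow> real) \<Rightarrow> ('r \<Rightarrow> real) \<Rightarrow> ereal" where
  "lp_min C BY h = Inf {ereal (\<Sum>j\<in>UNIV. C j * Y j) | Y.
      (\<forall>j. 0 \<le> Y j) \<and> (\<forall>r. h r \<le> (\<Sum>j\<in>UNIV. BY r j * Y j))}"

definition recourse ::
  "('y::finite \<Rightarrow> real) \<Rightarrow> ('r::finite \<Rightarrow> 'y \<Rightarrow> real) \<Rightarrow> ('r \<Rightarrow> 'i::finite \<Rightarrow> real)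
   \<Rightarrow> ('r \<Rightarrow> 'x::finite \<Rightarrow> real) \<Rightarrow> ('r \<Rightarrow> real) \<Rightarrow> ('x \<Rightarrow> real) \<Rightarrow> real^'i \<Rightarrow> ereal" where
  "recourse CY BY Bxi BX d X xi =
     lp_min CY BY (\<lambda>r. d r - (\<Sum>x\<in>UNIV. BX r x * X x) - (\<Sum>i\<in>UNIV. Bxi r i * xi $ i))"

definition Xi_box :: "real^'i::finite \<Rightarrow> real^'i \<Rightarrow> (real^'i) set" where
  "Xi_box xL xU = {xi. \<forall>i. xL $ i \<le> xi $ i \<and> xi $ i \<le> xU $ i}"

definition ambiguity_set ::
  "real^'i::finite \<Rightarrow> real^'i \<Rightarrow> real^'i \<Rightarrow> real^'i \<Rightarrow> (real^'i) measure set" where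
  "ambiguity_set xL xU gL gU = {M. prob_space M \<and> sets M = sets borel
      \<and> (AE xi in M. xi \<in> Xi_box xL xU)
      \<and> (\<forall>i. gL $ i \<le> (\<integral>xi. xi $ i \<partial>M) \<and> (\<integral>xi. xi $ i \<partial>M) \<le> gU $ i)}"

definition worst_case :: "(real^'i::finite \<Rightarrow> real) \<Rightarrow> (real^'i) measure set \<Rightarrow> real" where
  "worst_case f Pset = Sup ((\<lambda>M. \<integral>xi. f xi \<partial>M) ` Pset)"

definition vertex :: "real^'i::finite \<Rightarrow> real^'i \<Rightarrow> ('i \<Rightarrow> bool) \<Rightarrow> real^'i" where
  "vertex xL xU z = (\<chi> i. xL $ i + (xU $ i - xL $ i) * (if z i then 1 else 0))"

definition vertex_lp :: "(real^'i::finite \<Rightarrow> real) \<Rightarrow> real^'i \<Rightarrow> real^'i \<Rightarrow> real^'i \<Rightarrow> real^'i \<Rightarrow> real" where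
  "vertex_lp f xL xU gL gU = Sup {(\<Sum>z\<in>UNIV. P z * f (vertex xL xU z)) | P.
      (\<Sum>z\<in>UNIV. P z) = 1 \<and> (\<forall>z. 0 \<le> P z)
      \<and> (\<forall>i. gL $ i \<le> (\<Sum>z\<in>UNIV. P z * vertex xL xU z $ i)
             \<and> (\<Sum>z\<in>UNIV. P z * vertex xL xU z $ i) \<le> gU $ i)}"

end

theory Submission
  imports Defs
begin

definition lpE :: "('y::finite \<Rightarrow> real) \<Rightarrow> ('r::finite \<Rightarrow> 'y \<Rightarrow> real) \<Rightarrow> ((real^'r) \<times> real) set" where
  "lpE C BY = {(h, t). \<exists>Y. (\<forall>j. 0 \<le> Y j) \<and> (\<forall>r. h$r \<le> (\<Sum>j\<in>UNIV. BY r j * Y j)) \<and> (\<Sum>j\<in>UNIV. C j * Y j) \<le> t}"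

lemma cone_hull_sum:
  assumes "finite A" "\<And>i. i \<in> A \<Longrightarrow> 0 \<le> a i" "\<And>i. i \<in> A \<Longrightarrow> v i \<in> convex_cone hull G"
  shows "(\<Sum>i\<in>A. a i *\<^sub>R v i) \<in> convex_cone hull G"
  using assms
proof (induction A rule: finite_induct)
  case empty then show ?case by (simp add: convex_cone_hull_contains_0)
next
  case (insert x F)
  then show ?case by (simp add: convex_cone_hull_add convex_cone_hull_mul)
qed

lemma lpE_hull:
  "lpE C BY = convex_cone hull
     (range (\<lambda>j. ((\<chi> r. BY r j), C j)) \<union> range (\<lambda>r. (- axis r 1, 0)) \<union> {(0, 1)})"
  (is "_ = convex_cone hull ?G")
proof
  show "convex_cone hull ?G \<subseteq> lpE C BY"
  proof (rule hull_minimal)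
    show "?G \<subseteq> lpE C BY"
    proof safe
      fix j
      show "((\<chi> r. BY r j), C j) \<in> lpE C BY"
        unfolding lpE_def
        by (auto intro!: exI[of _ "\<lambda>k. if k = j then 1 else 0"] simp: if_distrib cong: if_cong)
    next
      fix r
      show "(- axis r 1, 0) \<in> lpE C BY"
        unfolding lpE_def
        by (auto intro!: exI[of _ "\<lambda>k. 0"] simp: axis_def)
    next
      show "(0, 1) \<in> lpE C BY"
        unfolding lpE_def
        by (auto intro!: exI[of _ "\<lambda>k. 0"])
    qed
    show "convex_cone (lpE C BY)"
      unfolding convex_cone_iff
    proof (intro conjI ballI allI impI)
      show "0 \<in> lpE C BY" unfolding lpE_def zero_prod_def
        by (auto intro!: exI[of _ "\<lambda>k. 0"])
    next
      fix x y assume "x \<in> lpE C BY" "y \<in> lpE C BY"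
      then obtain h1 t1 Y1 h2 t2 Y2 where x: "x = (h1,t1)" "\<forall>j. 0 \<le> Y1 j" "\<forall>r. h1$r \<le> (\<Sum>j\<in>UNIV. BY r j * Y1 j)" "(\<Sum>j\<in>UNIV. C j * Y1 j) \<le> t1"
        and y: "y = (h2,t2)" "\<forall>j. 0 \<le> Y2 j" "\<forall>r. h2$r \<le> (\<Sum>j\<in>UNIV. BY r j * Y2 j)" "(\<Sum>j\<in>UNIV. C j * Y2 j) \<le> t2"
        unfolding lpE_def by auto
      show "x + y \<in> lpE C BY"
        unfolding lpE_def x y
        using x y
        by (auto intro!: exI[of _ "\<lambda>k. Y1 k + Y2 k"] simp: distrib_left sum.distrib add_mono)
    next
      fix x and c :: real assume "x \<in> lpE C BY" "0 \<le> c"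
      then obtain h1 t1 Y1 where x: "x = (h1,t1)" "\<forall>j. 0 \<le> Y1 j" "\<forall>r. h1$r \<le> (\<Sum>j\<in>UNIV. BY r j * Y1 j)" "(\<Sum>j\<in>UNIV. C j * Y1 j) \<le> t1"
        unfolding lpE_def by auto
      have e1: "(\<Sum>j\<in>UNIV. BY r j * (c * Y1 j)) = c * (\<Sum>j\<in>UNIV. BY r j * Y1 j)" for r
        by (simp add: sum_distrib_left mult.assoc mult.left_commute)
      have e2: "(\<Sum>j\<in>UNIV. C j * (c * Y1 j)) = c * (\<Sum>j\<in>UNIV. C j * Y1 j)"
        by (simp add: sum_distrib_left mult.assoc mult.left_commute)
      show "c *\<^sub>R x \<in> lpE C BY"
        unfolding lpE_def x
        using x \<open>0 \<le> c\<close>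
        by (auto intro!: exI[of _ "\<lambda>k. c * Y1 k"] simp: e1 e2 mult_left_mono)
    qed
  qed
next
  show "lpE C BY \<subseteq> convex_cone hull ?G"
  proof
    fix z assume "z \<in> lpE C BY"
    then obtain h t Y where z: "z = (h,t)" and Y: "\<forall>j. 0 \<le> Y j" "\<forall>r. h$r \<le> (\<Sum>j\<in>UNIV. BY r j * Y j)" "(\<Sum>j\<in>UNIV. C j * Y j) \<le> t"
      unfolding lpE_def by auto
    define s where "s r = (\<Sum>j\<in>UNIV. BY r j * Y j) - h$r" for r
    have eq: "z = (\<Sum>j\<in>UNIV. Y j *\<^sub>R ((\<chi> r. BY r j), C j)) + (\<Sum>r\<in>UNIV. s r *\<^sub>R (- axis r 1, 0))
           + (t - (\<Sum>j\<in>UNIV. C j * Y j)) *\<^sub>R (0, 1)"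
    proof -
      have "fst z = fst (\<Sum>j\<in>UNIV. Y j *\<^sub>R ((\<chi> r. BY r j), C j)) + fst (\<Sum>r\<in>UNIV. s r *\<^sub>R (- axis r 1, 0))"
      proof -
        have "h $ k = (\<Sum>j\<in>UNIV. Y j * BY k j) + (\<Sum>r\<in>UNIV. s r * (- axis r 1 $ k))" for k
        proof -
          have "(\<Sum>r\<in>UNIV. s r * (- axis r 1 $ k)) = - s k"
            by (simp add: axis_def if_distrib cong: if_cong)
          then show ?thesis by (simp add: s_def mult.commute)
        qed
        then show ?thesis unfolding z by (simp add: fst_sum vec_eq_iff)
      qed
      moreover have "snd z = snd (\<Sum>j\<in>UNIV. Y j *\<^sub>R ((\<chi> r. BY r j), C j)) + snd (\<Sum>r\<in>UNIV. s r *\<^sub>R (- axis r 1, 0))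
           + (t - (\<Sum>j\<in>UNIV. C j * Y j))"
        unfolding z by (simp add: snd_sum mult.commute)
      ultimately show ?thesis by (simp add: prod_eq_iff)
    qed
    have "(\<Sum>j\<in>UNIV. Y j *\<^sub>R ((\<chi> r. BY r j), C j)) \<in> convex_cone hull ?G"
      by (rule cone_hull_sum) (auto simp: Y hull_inc)
    moreover have "(\<Sum>r\<in>UNIV. s r *\<^sub>R (- axis r 1, 0)) \<in> convex_cone hull ?G"
      by (rule cone_hull_sum) (auto simp: Y s_def hull_inc)
    moreover have "(t - (\<Sum>j\<in>UNIV. C j * Y j)) *\<^sub>R (0::real^'a, 1::real) \<in> convex_cone hull ?G"
      using Y by (intro convex_cone_hull_mul) (auto simp: hull_inc)
    ultimately show "z \<in> convex_cone hull ?G"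
      unfolding eq by (intro convex_cone_hull_add)
  qed
qed

lemma closed_lpE: "closed (lpE C BY)"
  unfolding lpE_hull by (rule closed_convex_cone_hull) auto


lemma lp_min_le_iff:
  "lp_min C BY (\<lambda>r. h$r) \<le> ereal a \<longleftrightarrow> (h, a) \<in> lpE C BY"
proof
  assume "(h, a) \<in> lpE C BY"
  then obtain Y where Y: "\<forall>j. 0 \<le> Y j" "\<forall>r. h$r \<le> (\<Sum>j\<in>UNIV. BY r j * Y j)" "(\<Sum>j\<in>UNIV. C j * Y j) \<le> a"
    unfolding lpE_def by auto
  have "lp_min C BY (\<lambda>r. h$r) \<le> ereal (\<Sum>j\<in>UNIV. C j * Y j)"
    unfolding lp_min_def using Y by (intro Inf_lower) auto
  also have "\<dots> \<le> ereal a" using Y by simp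
  finally show "lp_min C BY (\<lambda>r. h$r) \<le> ereal a" .
next
  assume le: "lp_min C BY (\<lambda>r. h$r) \<le> ereal a"
  have "(h, a + inverse (real (Suc n))) \<in> lpE C BY" for n
  proof -
    have "lp_min C BY (\<lambda>r. h$r) < ereal (a + inverse (real (Suc n)))"
      using le by (rule le_less_trans) simp
    then obtain Y where Y: "\<forall>j. 0 \<le> Y j" "\<forall>r. h$r \<le> (\<Sum>j\<in>UNIV. BY r j * Y j)"
        "ereal (\<Sum>j\<in>UNIV. C j * Y j) < ereal (a + inverse (real (Suc n)))"
      unfolding lp_min_def Inf_less_iff by auto
    then show ?thesis unfolding lpE_def by auto
  qed
  moreover have "(\<lambda>n. (h, a + inverse (real (Suc n)))) \<longlonglongrightarrow> (h, a)"
    by (intro tendsto_Pair tendsto_const LIMSEQ_inverse_real_of_nat_add)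
  ultimately show "(h, a) \<in> lpE C BY"
    by (rule closed_sequentially[OF closed_lpE])
qed

lemma ereal_minf_iff: "(x::ereal) \<le> -\<infinity> \<longleftrightarrow> (\<forall>n::nat. x \<le> ereal (- real n))"
proof (cases x)
  case (real q)
  obtain n :: nat where "-q < real n" using reals_Archimedean2 by blast
  then have "\<not> (x \<le> ereal (- real n))" using real by simp
  moreover have "\<not> x \<le> -\<infinity>" using real by simp
  ultimately show ?thesis by blast
qed auto

lemma lp_min_measurable:
  "(\<lambda>h::real^'r::finite. lp_min C BY (\<lambda>r. h$r)) \<in> borel_measurable borel"
proof (rule borel_measurableI_le)
  fix y :: ereal
  have cl: "closed {h::real^'r. lp_min C BY (\<lambda>r. h$r) \<le> ereal a}" for a
  proof -
    have "{h::real^'r. lp_min C BY (\<lambda>r. h$r) \<le> ereal a} = (\<lambda>h. (h, a)) -` lpE C BY"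
      by (auto simp: lp_min_le_iff)
    also have "closed \<dots>"
      by (intro closed_vimage closed_lpE continuous_intros)
    finally show ?thesis .
  qed
  show "{x \<in> space borel. lp_min C BY (\<lambda>r. x$r) \<le> y} \<in> sets borel"
  proof (cases y)
    case (real a)
    then show ?thesis using cl[of a] by auto
  next
    case PInf
    then show ?thesis by simp
  next
    case MInf
    have "{x \<in> space borel. lp_min C BY (\<lambda>r. x$r) \<le> y} = (\<Inter>n. {h. lp_min C BY (\<lambda>r. h$r) \<le> ereal (- real n)})"
    proof (intro equalityI subsetI)
      fix x assume "x \<in> {x \<in> space borel. lp_min C BY (\<lambda>r. x$r) \<le> y}"
      then have "lp_min C BY (\<lambda>r. x$r) \<le> -\<infinity>" using MInf by simp
      then show "x \<in> (\<Inter>n. {h. lp_min C BY (\<lambda>r. h$r) \<le> ereal (- real n)})"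
        using ereal_minf_iff[of "lp_min C BY (\<lambda>r. x$r)"] by simp
    next
      fix x assume "x \<in> (\<Inter>n. {h. lp_min C BY (\<lambda>r. h$r) \<le> ereal (- real n)})"
      then have "lp_min C BY (\<lambda>r. x$r) \<le> -\<infinity>"
        using ereal_minf_iff[of "lp_min C BY (\<lambda>r. x$r)"] by simp
      then show "x \<in> {x \<in> space borel. lp_min C BY (\<lambda>r. x$r) \<le> y}" using MInf by simp
    qed
    also have "\<dots> \<in> sets borel"
      by (intro borel_closed closed_INT ballI cl)
    finally show ?thesis .
  qed
qed

lemma lp_min_convex:
  assumes "lp_min C BY h1 = ereal q1" "lp_min C BY h2 = ereal q2" "0 \<le> m" "m \<le> 1"
  shows "lp_min C BY (\<lambda>r. m * h1 r + (1 - m) * h2 r) \<le> ereal (m * q1 + (1 - m) * q2)"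
proof (rule ereal_le_epsilon2)
  fix e :: real assume e: "0 < e"
  obtain Y1 where Y1: "\<forall>j. 0 \<le> Y1 j" "\<forall>r. h1 r \<le> (\<Sum>j\<in>UNIV. BY r j * Y1 j)"
      "ereal (\<Sum>j\<in>UNIV. C j * Y1 j) < ereal (q1 + e)"
  proof -
    have "lp_min C BY h1 < ereal (q1 + e)" using assms(1) e by simp
    then show ?thesis using that unfolding lp_min_def Inf_less_iff by auto
  qed
  obtain Y2 where Y2: "\<forall>j. 0 \<le> Y2 j" "\<forall>r. h2 r \<le> (\<Sum>j\<in>UNIV. BY r j * Y2 j)"
      "ereal (\<Sum>j\<in>UNIV. C j * Y2 j) < ereal (q2 + e)"
  proof -
    have "lp_min C BY h2 < ereal (q2 + e)" using assms(2) e by simp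
    then show ?thesis using that unfolding lp_min_def Inf_less_iff by auto
  qed
  define Y where "Y j = m * Y1 j + (1 - m) * Y2 j" for j
  have lin: "(\<Sum>j\<in>UNIV. A j * Y j) = m * (\<Sum>j\<in>UNIV. A j * Y1 j) + (1 - m) * (\<Sum>j\<in>UNIV. A j * Y2 j)" for A :: "_ \<Rightarrow> real"
  proof -
    have "(\<Sum>j\<in>UNIV. A j * Y j) = (\<Sum>j\<in>UNIV. m * (A j * Y1 j) + (1-m) * (A j * Y2 j))"
      by (rule sum.cong) (auto simp: Y_def algebra_simps)
    also have "\<dots> = m * (\<Sum>j\<in>UNIV. A j * Y1 j) + (1 - m) * (\<Sum>j\<in>UNIV. A j * Y2 j)"
      by (simp add: sum.distrib sum_distrib_left)
    finally show ?thesis .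
  qed
  have feas: "\<forall>j. 0 \<le> Y j" using Y1 Y2 assms by (simp add: Y_def)
  have feas2: "\<forall>r. m * h1 r + (1 - m) * h2 r \<le> (\<Sum>j\<in>UNIV. BY r j * Y j)"
    using Y1 Y2 assms by (auto simp: lin intro!: add_mono mult_left_mono)
  have "lp_min C BY (\<lambda>r. m * h1 r + (1 - m) * h2 r) \<le> ereal (\<Sum>j\<in>UNIV. C j * Y j)"
    unfolding lp_min_def using feas feas2 by (intro Inf_lower) auto
  also have "(\<Sum>j\<in>UNIV. C j * Y j) \<le> m * (q1 + e) + (1 - m) * (q2 + e)"
    using Y1 Y2 assms by (auto simp: lin intro!: add_mono mult_left_mono)
  also have "m * (q1 + e) + (1 - m) * (q2 + e) = (m * q1 + (1 - m) * q2) + e"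
    by (simp add: algebra_simps)
  finally show "lp_min C BY (\<lambda>r. m * h1 r + (1 - m) * h2 r) \<le> ereal (m * q1 + (1 - m) * q2) + ereal e"
    by simp
qed



lemma sum_bool_fun_prod:
  fixes g :: "'i::finite \<Rightarrow> bool \<Rightarrow> real"
  shows "(\<Sum>z\<in>UNIV. \<Prod>i\<in>UNIV. g i (z i)) = (\<Prod>i\<in>UNIV. g i True + g i False)"
proof -
  have "(\<Prod>i\<in>UNIV. \<Sum>b\<in>UNIV. g i b) = (\<Sum>z\<in>PiE UNIV (\<lambda>_. UNIV). \<Prod>i\<in>UNIV. g i (z i))"
    by (rule prod_sum_PiE) auto
  then have "(\<Prod>i\<in>UNIV. \<Sum>b\<in>UNIV. g i b) = (\<Sum>z\<in>UNIV. \<Prod>i\<in>UNIV. g i (z i))"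
    by (simp only: PiE_UNIV)
  then show ?thesis by (simp add: UNIV_bool add.commute)
qed

definition tco :: "real^'i::finite \<Rightarrow> real^'i \<Rightarrow> 'i \<Rightarrow> real^'i \<Rightarrow> real" where
  "tco xL xU i xi = (if xL$i < xU$i then (xi$i - xL$i) / (xU$i - xL$i) else 0)"

definition lam :: "real^'i::finite \<Rightarrow> real^'i \<Rightarrow> ('i \<Rightarrow> bool) \<Rightarrow> real^'i \<Rightarrow> real" where
  "lam xL xU z xi = (\<Prod>i\<in>UNIV. if z i then tco xL xU i xi else 1 - tco xL xU i xi)"

lemma lam_sum: "(\<Sum>z\<in>UNIV. lam xL xU z xi) = 1"
  unfolding lam_def using sum_bool_fun_prod[of "\<lambda>i b. if b then tco xL xU i xi else 1 - tco xL xU i xi"]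
  by simp

lemma lam_marg: "(\<Sum>z\<in>UNIV. lam xL xU z xi * (if z j then 1 else 0)) = tco xL xU j xi"
proof -
  let ?g = "\<lambda>i b. (if b then tco xL xU i xi else 1 - tco xL xU i xi) * (if i = j then (if b then 1 else 0) else 1)"
  have "lam xL xU z xi * (if z j then 1 else 0) = (\<Prod>i\<in>UNIV. ?g i (z i))" for z
  proof -
    have "(\<Prod>i\<in>UNIV. (if i = j then (if z i then 1 else 0) else 1)) = (if z j then 1 else (0::real))"
      by (simp add: prod.delta')
    then show ?thesis unfolding lam_def prod.distrib by simp
  qed
  then have "(\<Sum>z\<in>UNIV. lam xL xU z xi * (if z j then 1 else 0)) = (\<Prod>i\<in>UNIV. ?g i True + ?g i False)"
    using sum_bool_fun_prod[of ?g] by simp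
  also have "\<dots> = (\<Prod>i\<in>UNIV. if i = j then tco xL xU j xi else 1)"
    by (rule prod.cong) auto
  also have "\<dots> = tco xL xU j xi" by (simp add: prod.delta')
  finally show ?thesis .
qed

lemma tco_bounds:
  assumes "xi \<in> Xi_box xL xU"
  shows "0 \<le> tco xL xU i xi" "tco xL xU i xi \<le> 1"
  using assms by (auto simp: tco_def Xi_box_def divide_le_eq_1)

lemma lam_nonneg: "xi \<in> Xi_box xL xU \<Longrightarrow> 0 \<le> lam xL xU z xi"
  unfolding lam_def using tco_bounds by (intro prod_nonneg) auto

lemma vertex_comb:
  "(\<Sum>z\<in>UNIV. lam xL xU z xi * vertex xL xU z $ j)
     = xL$j + (xU$j - xL$j) * tco xL xU j xi"
proof -
  have "(\<Sum>z\<in>UNIV. lam xL xU z xi * vertex xL xU z $ j)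
      = (\<Sum>z\<in>UNIV. xL$j * lam xL xU z xi + (xU$j - xL$j) * (lam xL xU z xi * (if z j then 1 else 0)))"
    by (rule sum.cong) (auto simp: vertex_def algebra_simps)
  also have "\<dots> = xL$j + (xU$j - xL$j) * tco xL xU j xi"
    by (simp add: sum.distrib sum_distrib_left[symmetric] lam_sum lam_marg)
  finally show ?thesis .
qed

lemma vertex_comb_box:
  assumes "xi \<in> Xi_box xL xU"
  shows "(\<Sum>z\<in>UNIV. lam xL xU z xi * vertex xL xU z $ j) = xi $ j"
  using assms unfolding vertex_comb by (auto simp: tco_def Xi_box_def) (meson order.antisym not_le order.trans)

lemma vertex_comb_vec:
  assumes "xi \<in> Xi_box xL xU"
  shows "(\<Sum>z\<in>UNIV. lam xL xU z xi *\<^sub>R vertex xL xU z) = xi"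
  using vertex_comb_box[OF assms] by (simp add: vec_eq_iff)

lemma vertex_in_box: "\<forall>i. xL $ i \<le> xU $ i \<Longrightarrow> vertex xL xU z \<in> Xi_box xL xU"
  by (auto simp: vertex_def Xi_box_def)

lemma convex_box: "convex (Xi_box xL xU)"
  unfolding Xi_box_def convex_def
proof (intro allI impI ballI, simp only: mem_Collect_eq, intro allI conjI)
  fix x y :: "real^'a" and u v :: real and i
  assume x: "\<forall>i. xL $ i \<le> x $ i \<and> x $ i \<le> xU $ i" and y: "\<forall>i. xL $ i \<le> y $ i \<and> y $ i \<le> xU $ i"
    and uv: "0 \<le> u" "0 \<le> v" "u + v = 1"
  have "u * xL$i + v * xL$i \<le> u * x$i + v * y$i" using x y uv by (intro add_mono mult_left_mono) auto
  moreover have "u * xL$i + v * xL$i = xL$i" using uv by (simp add: distrib_right[symmetric])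
  moreover have "u * x$i + v * y$i \<le> u * xU$i + v * xU$i" using x y uv by (intro add_mono mult_left_mono) auto
  moreover have "u * xU$i + v * xU$i = xU$i" using uv by (simp add: distrib_right[symmetric])
  ultimately show "xL $ i \<le> (u *\<^sub>R x + v *\<^sub>R y) $ i" "(u *\<^sub>R x + v *\<^sub>R y) $ i \<le> xU $ i" by auto
qed


lemma tco_alt: "tco xL xU i xi = (if xL$i < xU$i then 1 / (xU$i - xL$i) else 0) * (xi$i - xL$i)"
  by (simp add: tco_def)

lemma lam_cont: "continuous_on UNIV (lam xL xU z)"
proof -
  have "continuous_on UNIV (\<lambda>xi. if z i then tco xL xU i xi else 1 - tco xL xU i xi)" for i
    by (cases "z i") (auto simp: tco_alt intro!: continuous_intros)
  then show ?thesis unfolding lam_def by (intro continuous_on_prod) auto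
qed

lemma lam_le1: "xi \<in> Xi_box xL xU \<Longrightarrow> lam xL xU z xi \<le> 1"
  using member_le_sum[of z UNIV "\<lambda>z. lam xL xU z xi"] lam_nonneg[of xi xL xU] lam_sum[of xL xU xi] by auto

lemma closed_box: "closed (Xi_box xL xU)"
  unfolding Xi_box_def
  by (intro closed_Collect_all closed_Collect_conj closed_Collect_le continuous_intros)

lemma abstract_main:
  fixes f :: "real^'i::finite \<Rightarrow> real" and xL xU gL gU :: "real^'i"
  assumes le: "\<forall>i. xL$i \<le> xU$i"
    and fm: "f \<in> borel_measurable borel"
    and cv: "convex_on (Xi_box xL xU) f"
    and ne: "ambiguity_set xL xU gL gU \<noteq> {}"
  shows "worst_case f (ambiguity_set xL xU gL gU) = vertex_lp f xL xU gL gU"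
proof -
  let ?C = "Xi_box xL xU"
  let ?v = "vertex xL xU"
  define Kv where "Kv = (\<Sum>z\<in>UNIV. \<bar>f (?v z)\<bar>)"
  have Kv: "\<bar>f (?v z)\<bar> \<le> Kv" for z
    unfolding Kv_def by (rule member_le_sum) auto
  have vC: "?v z \<in> ?C" for z using le by (rule vertex_in_box)
  have upper: "f xi \<le> (\<Sum>z\<in>UNIV. lam xL xU z xi * f (?v z))" if xi: "xi \<in> ?C" for xi
  proof -
    have "f (\<Sum>z\<in>UNIV. lam xL xU z xi *\<^sub>R ?v z) \<le> (\<Sum>z\<in>UNIV. lam xL xU z xi * f (?v z))"
      by (rule convex_on_sum[OF _ _ cv]) (auto simp: lam_sum lam_nonneg[OF xi] vC)
    then show ?thesis using vertex_comb_vec[OF xi] by simp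
  qed
  have upperK: "f xi \<le> Kv" if xi: "xi \<in> ?C" for xi
  proof -
    have "(\<Sum>z\<in>UNIV. lam xL xU z xi * f (?v z)) \<le> (\<Sum>z\<in>UNIV. lam xL xU z xi * Kv)"
      using Kv lam_nonneg[OF xi] by (intro sum_mono mult_left_mono) (auto simp: abs_le_iff)
    also have "\<dots> = Kv" by (simp add: sum_distrib_right[symmetric] lam_sum)
    finally show ?thesis using upper[OF xi] by simp
  qed
  define c where "c = (1/2::real) *\<^sub>R (xL + xU)"
  have cC: "c \<in> ?C" using le by (auto simp: c_def Xi_box_def)
  have lower: "2 * f c - Kv \<le> f xi" if xi: "xi \<in> ?C" for xi
  proof -
    define xi' where "xi' = xL + xU - xi"
    have xi': "xi' \<in> ?C" using xi by (auto simp: xi'_def Xi_box_def)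
    have "c = (1 - 1/2::real) *\<^sub>R xi + (1/2::real) *\<^sub>R xi'"
      by (simp add: c_def xi'_def vec_eq_iff algebra_simps)
    then have "f c \<le> (1 - 1/2) * f xi + (1/2) * f xi'"
      using convex_onD[OF cv, of "1/2" xi xi'] xi xi' by simp
    then show ?thesis using upperK[OF xi'] by simp
  qed
  define K where "K = Kv + 2 * \<bar>f c\<bar>"
  have bound: "\<bar>f xi\<bar> \<le> K" if xi: "xi \<in> ?C" for xi
    using upperK[OF xi] lower[OF xi] Kv[of undefined] by (auto simp: K_def abs_le_iff)
  define B where "B = {(\<Sum>z\<in>UNIV. P z * f (?v z)) | P.
      (\<Sum>z\<in>UNIV. P z) = 1 \<and> (\<forall>z. 0 \<le> P z)
      \<and> (\<forall>i. gL $ i \<le> (\<Sum>z\<in>UNIV. P z * ?v z $ i) \<and> (\<Sum>z\<in>UNIV. P z * ?v z $ i) \<le> gU $ i)}"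
  define A where "A = (\<lambda>M. \<integral>xi. f xi \<partial>M) ` ambiguity_set xL xU gL gU"
  have vlp: "vertex_lp f xL xU gL gU = Sup B" unfolding vertex_lp_def B_def ..
  have wc: "worst_case f (ambiguity_set xL xU gL gU) = Sup A" unfolding worst_case_def A_def ..
  have Bbd: "b \<le> Kv" if "b \<in> B" for b
  proof -
    from that obtain P where P: "b = (\<Sum>z\<in>UNIV. P z * f (?v z))" "(\<Sum>z\<in>UNIV. P z) = 1" "\<forall>z. 0 \<le> P z"
      unfolding B_def by blast
    have "(\<Sum>z\<in>UNIV. P z * f (?v z)) \<le> (\<Sum>z\<in>UNIV. P z * Kv)"
      using Kv P by (intro sum_mono mult_left_mono) (auto simp: abs_le_iff)
    also have "\<dots> = Kv" using P by (simp add: sum_distrib_right[symmetric])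
    finally show ?thesis using P by simp
  qed
  have AB: "\<exists>b\<in>B. a \<le> b" if "a \<in> A" for a
  proof -
    from that obtain M where M: "M \<in> ambiguity_set xL xU gL gU" and a: "a = (\<integral>xi. f xi \<partial>M)"
      unfolding A_def by blast
    from M have ps: "prob_space M" and sM: "sets M = sets borel" and AEC: "AE xi in M. xi \<in> ?C"
      and mean: "\<forall>i. gL $ i \<le> (\<integral>xi. xi $ i \<partial>M) \<and> (\<integral>xi. xi $ i \<partial>M) \<le> gU $ i"
      unfolding ambiguity_set_def by auto
    interpret prob_space M by (rule ps)
    have bm: "borel_measurable M = borel_measurable borel"
      by (rule measurable_cong_sets) (simp_all add: sM)
    have lam_m: "lam xL xU z \<in> borel_measurable M" for z
      unfolding bm by (rule borel_measurable_continuous_onI[OF lam_cont])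
    have nth_m: "(\<lambda>xi::real^'i. xi $ i) \<in> borel_measurable M" for i
      unfolding bm by (intro borel_measurable_continuous_onI continuous_intros)
    have f_m: "f \<in> borel_measurable M" unfolding bm by (rule fm)
    have f_int: "integrable M f"
      by (rule integrable_const_bound[where B=K]) (use AEC bound f_m in auto)
    have lam_int: "integrable M (lam xL xU z)" for z
    proof (rule integrable_const_bound[where B=1])
      show "AE xi in M. norm (lam xL xU z xi) \<le> 1"
        using AEC by eventually_elim (auto simp: abs_of_nonneg lam_nonneg lam_le1)
    qed (rule lam_m)
    define P where "P z = (\<integral>xi. lam xL xU z xi \<partial>M)" for z
    have "a \<le> (\<integral>xi. (\<Sum>z\<in>UNIV. lam xL xU z xi * f (?v z)) \<partial>M)"
      unfolding a
      by (rule integral_mono_AE[OF f_int]) (use AEC upper lam_int in auto)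
    also have "\<dots> = (\<Sum>z\<in>UNIV. P z * f (?v z))"
      by (simp add: P_def lam_int)
    finally have aP: "a \<le> (\<Sum>z\<in>UNIV. P z * f (?v z))" .
    have P1: "(\<Sum>z\<in>UNIV. P z) = 1"
    proof -
      have "(\<Sum>z\<in>UNIV. P z) = (\<integral>xi. (\<Sum>z\<in>UNIV. lam xL xU z xi) \<partial>M)"
        unfolding P_def by (simp add: lam_int)
      also have "\<dots> = 1" by (simp add: lam_sum prob_space)
      finally show ?thesis .
    qed
    have P0: "\<forall>z. 0 \<le> P z"
      unfolding P_def
    proof (intro allI integral_nonneg_AE)
      fix z show "AE xi in M. 0 \<le> lam xL xU z xi"
        using AEC by eventually_elim (rule lam_nonneg)
    qed
    have Pm: "(\<Sum>z\<in>UNIV. P z * ?v z $ i) = (\<integral>xi. xi $ i \<partial>M)" for i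
    proof -
      have "(\<Sum>z\<in>UNIV. P z * ?v z $ i) = (\<integral>xi. (\<Sum>z\<in>UNIV. lam xL xU z xi * ?v z $ i) \<partial>M)"
        unfolding P_def by (simp add: lam_int)
      also have "\<dots> = (\<integral>xi. xi $ i \<partial>M)"
      proof (rule integral_cong_AE)
        show "AE xi in M. (\<Sum>z\<in>UNIV. lam xL xU z xi * ?v z $ i) = xi $ i"
          using AEC by eventually_elim (rule vertex_comb_box)
      qed (use lam_m nth_m in auto)
      finally show ?thesis .
    qed
    have "(\<Sum>z\<in>UNIV. P z * f (?v z)) \<in> B"
      unfolding B_def using P1 P0 Pm mean by auto
    then show ?thesis using aP by blast
  qed
  have BA: "B \<subseteq> A"
  proof
    fix b assume "b \<in> B"
    then obtain P where P: "b = (\<Sum>z\<in>UNIV. P z * f (?v z))" "(\<Sum>z\<in>UNIV. P z) = 1" "\<forall>z. 0 \<le> P z"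
      "\<forall>i. gL $ i \<le> (\<Sum>z\<in>UNIV. P z * ?v z $ i) \<and> (\<Sum>z\<in>UNIV. P z * ?v z $ i) \<le> gU $ i"
      unfolding B_def by blast
    have P0: "\<And>z. 0 \<le> P z" using P by auto
    have Pint: "(\<integral>\<^sup>+z. ennreal (P z) \<partial>count_space UNIV) = 1"
      using P by (simp add: nn_integral_count_space_finite)
    define p where "p = embed_pmf P"
    have pp: "pmf p z = P z" for z unfolding p_def by (rule pmf_embed_pmf[OF P0 Pint])
    define M where "M = distr (measure_pmf p) borel ?v"
    have vm: "?v \<in> measurable (measure_pmf p) borel" by simp
    have sM: "sets M = sets borel" by (simp add: M_def)
    have psM: "prob_space M" unfolding M_def
      by (rule prob_space.prob_space_distr[OF prob_space_measure_pmf vm])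
    have intM: "(\<integral>xi. g xi \<partial>M) = (\<Sum>z\<in>UNIV. P z * g (?v z))" if g: "g \<in> borel_measurable borel" for g
    proof -
      have "(\<integral>xi. g xi \<partial>M) = (\<integral>z. g (?v z) \<partial>measure_pmf p)"
        unfolding M_def by (rule integral_distr[OF vm g])
      also have "\<dots> = (\<Sum>z\<in>UNIV. g (?v z) * pmf p z)"
        by (rule integral_measure_pmf_real) auto
      finally show ?thesis by (simp add: pp mult.commute)
    qed
    have AEM: "AE xi in M. xi \<in> ?C"
      unfolding M_def
      by (subst AE_distr_iff[OF vm]) (auto intro: borel_closed closed_box vC)
    have "M \<in> ambiguity_set xL xU gL gU"
      unfolding ambiguity_set_def
      using psM sM AEM P(4) intM[of "\<lambda>xi. xi $ i" for i]
      by (auto intro: borel_measurable_continuous_onI continuous_intros)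
    moreover have "(\<integral>xi. f xi \<partial>M) = b" using intM[OF fm] P(1) by simp
    ultimately show "b \<in> A" unfolding A_def by blast
  qed
  have Ane: "A \<noteq> {}" using ne by (simp add: A_def)
  then obtain a0 where "a0 \<in> A" by blast
  then have Bne: "B \<noteq> {}" using AB by blast
  have bddB: "bdd_above B" using Bbd by (rule bdd_aboveI)
  have bddA: "bdd_above A"
    by (rule bdd_aboveI[where M=Kv]) (use AB Bbd in force)
  have "Sup A \<le> Sup B" by (rule cSup_mono[OF Ane bddB AB])
  moreover have "Sup B \<le> Sup A" by (rule cSup_subset_mono[OF Bne bddA BA])
  ultimately show ?thesis unfolding wc vlp by simp
qed


theorem corollary1:
  fixes CY :: "'y::finite \<Rightarrow> real" and BY :: "'r::finite \<Rightarrow> 'y \<Rightarrow> real"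
    and Bxi :: "'r \<Rightarrow> ('k::finite \<times> 't::finite) \<Rightarrow> real"
    and BX :: "'r \<Rightarrow> 'x::finite \<Rightarrow> real" and d :: "'r \<Rightarrow> real" and Xstar :: "'x \<Rightarrow> real"
    and xL xU gL gU :: "real^('k \<times> 't)"
  assumes "\<forall>i. xL $ i \<le> xU $ i"
    and "\<forall>i. gL $ i \<le> gU $ i"
    and "\<forall>xi\<in>Xi_box xL xU. \<bar>recourse CY BY Bxi BX d Xstar xi\<bar> \<noteq> \<infinity>"
    and "ambiguity_set xL xU gL gU \<noteq> {}"
  shows "worst_case (\<lambda>xi. real_of_ereal (recourse CY BY Bxi BX d Xstar xi)) (ambiguity_set xL xU gL gU)
       = vertex_lp (\<lambda>xi. real_of_ereal (recourse CY BY Bxi BX d Xstar xi)) xL xU gL gU"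
proof (rule abstract_main[OF assms(1) _ _ assms(4)])
  let ?R = "recourse CY BY Bxi BX d Xstar"
  define hv :: "real^('k \<times> 't) \<Rightarrow> real^'r" where
    "hv xi = (\<chi> r. d r - (\<Sum>x\<in>UNIV. BX r x * Xstar x) - (\<Sum>i\<in>UNIV. Bxi r i * xi $ i))" for xi
  have R_eq: "?R xi = lp_min CY BY (\<lambda>r. hv xi $ r)" for xi
    by (simp add: recourse_def hv_def)
  have hv_m: "hv \<in> borel_measurable borel"
    unfolding hv_def by (intro borel_measurable_continuous_onI continuous_intros)
  have "(\<lambda>xi. lp_min CY BY (\<lambda>r. hv xi $ r)) \<in> borel_measurable borel"
    using measurable_compose[OF hv_m lp_min_measurable[of CY BY]] by simp
  then have "?R \<in> borel_measurable borel" unfolding R_eq .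
  then show "(\<lambda>xi. real_of_ereal (?R xi)) \<in> borel_measurable borel"
    by (rule borel_measurable_real_of_ereal)
  show "convex_on (Xi_box xL xU) (\<lambda>xi. real_of_ereal (?R xi))"
  proof (rule convex_onI[OF _ convex_box])
    fix t :: real and x y assume t: "0 < t" "t < 1" and x: "x \<in> Xi_box xL xU" and y: "y \<in> Xi_box xL xU"
    have mix: "(1 - t) *\<^sub>R x + t *\<^sub>R y \<in> Xi_box xL xU"
      using convex_box[of xL xU] x y t unfolding convex_def by auto
    have fin: "?R z = ereal (real_of_ereal (?R z))" if "z \<in> Xi_box xL xU" for z
      using assms(3) that by (simp add: ereal_real)
    have hmix: "(\<lambda>r. hv ((1 - t) *\<^sub>R x + t *\<^sub>R y) $ r)
        = (\<lambda>r. (1 - t) * hv x $ r + (1 - (1 - t)) * hv y $ r)"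
    proof
      fix r
      have "(\<Sum>i\<in>UNIV. Bxi r i * ((1 - t) * x $ i + t * y $ i))
          = (1 - t) * (\<Sum>i\<in>UNIV. Bxi r i * x $ i) + t * (\<Sum>i\<in>UNIV. Bxi r i * y $ i)"
      proof -
        have "(\<Sum>i\<in>UNIV. Bxi r i * ((1 - t) * x $ i + t * y $ i))
            = (\<Sum>i\<in>UNIV. (1 - t) * (Bxi r i * x $ i) + t * (Bxi r i * y $ i))"
          by (rule sum.cong) (auto simp: algebra_simps)
        also have "\<dots> = (1 - t) * (\<Sum>i\<in>UNIV. Bxi r i * x $ i) + t * (\<Sum>i\<in>UNIV. Bxi r i * y $ i)"
          by (simp add: sum.distrib sum_distrib_left)
        finally show ?thesis .
      qed
      then show "hv ((1 - t) *\<^sub>R x + t *\<^sub>R y) $ r = (1 - t) * hv x $ r + (1 - (1 - t)) * hv y $ r"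
        by (simp add: hv_def algebra_simps)
    qed
    have "?R ((1 - t) *\<^sub>R x + t *\<^sub>R y)
        \<le> ereal ((1 - t) * real_of_ereal (?R x) + (1 - (1 - t)) * real_of_ereal (?R y))"
      unfolding R_eq hmix
      by (rule lp_min_convex) (use t fin[OF x] fin[OF y] R_eq in auto)
    then have "real_of_ereal (?R ((1 - t) *\<^sub>R x + t *\<^sub>R y))
        \<le> (1 - t) * real_of_ereal (?R x) + (1 - (1 - t)) * real_of_ereal (?R y)"
      using fin[OF mix] by (metis ereal_less_eq(3))
    then show "real_of_ereal (?R ((1 - t) *\<^sub>R x + t *\<^sub>R y))
        \<le> (1 - t) * real_of_ereal (?R x) + t * real_of_ereal (?R y)" by simp
  qed
qed

end
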